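(* Let $B>0$. Consider the directed exponential network model with interaction effect on nodes $\{1,\dots,n\}$: for each pair $i<j\le n$ the pair $Y_{ij}=(a_{ij},a_{ji})\in\{0,1\}^2$ (where $a_{ij}=1$ indicates an edge from $i$ to $j$) is drawn, independently over pairs, from $$ g(a_{ij},a_{ji};\alpha_i,\beta_i,\alpha_j,\beta_j,\rho)=\frac{\exp\{(\alpha_i+\beta_j)a_{ij}+(\beta_i+\alpha_j)a_{ji}+\rho\, a_{ij}a_{ji}\}}{Z(\alpha_i,\beta_i,\alpha_j,\beta_j,\rho)}, $$ with $Z$ the normalizing constant, at true parameters $\alpha^*_i,\beta^*_i,\rho^*$, all lying in $[-B,B]$, with the identification normalization $\alpha^*_1=0$. Let $(\hat{\boldsymbol\alpha},\hat{\boldsymbol\beta},\hat\rho)$ be the maximum likelihood estimator, normalized by $\hat\alpha_1=0$. Set $\Delta\alpha=\frac1n\sum_{i\le n}(\hat\alpha_i-\alpha^*_i)$ and $\Delta\beta=\frac1n\sum_{i\le n}(\hat\beta_i-\beta^*_i)$. Then, as $n\to\infty$: (i) $(\hat\rho-\rho^* )^2=O_p(n^{-1/2}(\log n)^2)$; (ii) $(\Delta\alpha+\Delta\beta)^2=O_p(n^{-1/2}(\log n)^2)$; (iii) $\|\hat{\boldsymbol\alpha}-\boldsymbol\alpha^*-\Delta\alpha\|_2^2+\|\hat{\boldsymbol\beta}-\boldsymbol\beta^*-\Delta\beta\|_2^2=O_p(n^{1/2}(\log n)^2)$, where $\mathbf v-x$ denotes subtracting the scalar $x$ from every coordinate of $\mathbf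 v$.
   Context: The parameters $(\boldsymbol\alpha,\boldsymbol\beta,\rho)$ and $(\boldsymbol\alpha-x,\boldsymbol\beta+x,\rho)$ define the same model for every real $x$, which is why the normalization $\alpha_1=0$ is imposed. The maximum likelihood estimator maximizes $\sum_{i<j}\log g(a_{ij},a_{ji};\alpha_i,\beta_i,\alpha_j,\beta_j,\rho)$ over parameters in the (compact) parameter space with all coordinates in $[-B,B]$ and $\alpha_1=0$. $O_p$ denotes stochastic boundedness as $n\to\infty$. *)

theory Defs
  imports Complex_Main
begin

type_synonym adj = "nat \<Rightarrow> nat \<Rightarrow> bool"
type_synonym params = "(nat \<Rightarrow> real) \<times> (nat \<Rightarrow> real) \<times> real"

definition dyad_num :: "real \<Rightarrow> real \<Rightarrow> real \<Rightarrow> real \<Rightarrow> real \<Rightarrow> bool \<Rightarrow> bool \<Rightarrow> real" where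
  "dyad_num ai bi aj bj rho x y =
     exp ((ai + bj) * of_bool x + (bi + aj) * of_bool y + rho * of_bool x * of_bool y)"

definition dyad_Z :: "real \<Rightarrow> real \<Rightarrow> real \<Rightarrow> real \<Rightarrow> real \<Rightarrow> real" where
  "dyad_Z ai bi aj bj rho = (\<Sum>x\<in>(UNIV::bool set). \<Sum>y\<in>(UNIV::bool set). dyad_num ai bi aj bj rho x y)"

definition dyad_g :: "bool \<Rightarrow> bool \<Rightarrow> real \<Rightarrow> real \<Rightarrow> real \<Rightarrow> real \<Rightarrow> real \<Rightarrow> real" where
  "dyad_g x y ai bi aj bj rho = dyad_num ai bi aj bj rho x y / dyad_Z ai bi aj bj rho"

definition configs :: "nat \<Rightarrow> adj set" where
  "configs n = {a. \<forall>i j. a i j \<longrightarrow> i \<in> {1..n} \<and> j \<in> {1..n} \<and> i \<noteq> j}"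

definition pairs :: "nat \<Rightarrow> (nat \<times> nat) set" where
  "pairs n = {(i, j). 1 \<le> i \<and> i < j \<and> j \<le> n}"

definition lik :: "nat \<Rightarrow> params \<Rightarrow> adj \<Rightarrow> real" where
  "lik n \<theta> a = (case \<theta> of (al, be, rho) \<Rightarrow>
     (\<Prod>(i, j)\<in>pairs n. dyad_g (a i j) (a j i) (al i) (be i) (al j) (be j) rho))"

definition loglik :: "nat \<Rightarrow> params \<Rightarrow> adj \<Rightarrow> real" where
  "loglik n \<theta> a = (case \<theta> of (al, be, rho) \<Rightarrow>
     (\<Sum>(i, j)\<in>pairs n. ln (dyad_g (a i j) (a j i) (al i) (be i) (al j) (be j) rho)))"

definition prob :: "nat \<Rightarrow> params \<Rightarrow> (adj \<Rightarrow> bool) \<Rightarrow> real" where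
  "prob n \<theta> E = (\<Sum>a\<in>{a\<in>configs n. E a}. lik n \<theta> a)"

definition param_space :: "real \<Rightarrow> nat \<Rightarrow> params set" where
  "param_space B n = {(al, be, rho). al 1 = 0 \<and> (\<forall>i\<in>{1..n}. \<bar>al i\<bar> \<le> B \<and> \<bar>be i\<bar> \<le> B) \<and> \<bar>rho\<bar> \<le> B}"

definition is_mle :: "real \<Rightarrow> nat \<Rightarrow> adj \<Rightarrow> params \<Rightarrow> bool" where
  "is_mle B n a \<theta> \<longleftrightarrow> \<theta> \<in> param_space B n \<and>
     (\<forall>\<theta>'\<in>param_space B n. loglik n \<theta>' a \<le> loglik n \<theta> a)"

definition bigOp :: "(nat \<Rightarrow> (adj \<Rightarrow> bool) \<Rightarrow> real) \<Rightarrow> (nat \<Rightarrow> adj \<Rightarrow> real) \<Rightarrow> (nat \<Rightarrow> real) \<Rightarrow> bool" where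
  "bigOp P X r \<longleftrightarrow> (\<forall>\<epsilon>>0. \<exists>M N. \<forall>n\<ge>N. P n (\<lambda>a. \<bar>X n a\<bar> > M * r n) < \<epsilon>)"

end

theory Submission
  imports Defs "HOL-Library.FuncSet"
begin


definition Psi :: "nat \<Rightarrow> (nat \<times> nat \<Rightarrow> bool \<times> bool) \<Rightarrow> adj" where
  "Psi n y i j = (if (i,j) \<in> pairs n then fst (y (i,j)) else if (j,i) \<in> pairs n then snd (y (j,i)) else False)"

definition Yp :: "adj \<Rightarrow> nat \<times> nat \<Rightarrow> bool \<times> bool" where
  "Yp a p = (a (fst p) (snd p), a (snd p) (fst p))"

definition gp :: "params \<Rightarrow> nat \<times> nat \<Rightarrow> bool \<times> bool \<Rightarrow> real" where
  "gp \<theta> p k = (case \<theta> of (al, be, rho) \<Rightarrow>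
      dyad_g (fst k) (snd k) (al (fst p)) (be (fst p)) (al (snd p)) (be (snd p)) rho)"

definition Ex :: "nat \<Rightarrow> params \<Rightarrow> (adj \<Rightarrow> real) \<Rightarrow> real" where
  "Ex n \<theta> F = (\<Sum>a\<in>configs n. lik n \<theta> a * F a)"

lemma finite_pairs: "finite (pairs n)"
proof -
  have "pairs n \<subseteq> {1..n} \<times> {1..n}" unfolding pairs_def by auto
  thus ?thesis by (rule finite_subset) auto
qed

lemma card_pairs: "card (pairs n) \<le> n^2"
proof -
  have "pairs n \<subseteq> {1..n} \<times> {1..n}" unfolding pairs_def by auto
  hence "card (pairs n) \<le> card ({1..n} \<times> {1..n})" by (intro card_mono) auto
  thus ?thesis by (simp add: card_cartesian_product power2_eq_square)
qed

lemma Yp_Psi: "p \<in> pairs n \<Longrightarrow> Yp (Psi n y) p = y p"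
  unfolding Yp_def Psi_def pairs_def by (cases p) auto

lemma inj_Psi: "inj_on (Psi n) (PiE (pairs n) (\<lambda>_. UNIV))"
proof
  fix y y' assume y: "y \<in> PiE (pairs n) (\<lambda>_. UNIV)" and y': "y' \<in> PiE (pairs n) (\<lambda>_. UNIV)"
    and e: "Psi n y = Psi n y'"
  show "y = y'"
  proof
    fix p
    show "y p = y' p"
    proof (cases "p \<in> pairs n")
      case True
      then show ?thesis using Yp_Psi[OF True, of y] Yp_Psi[OF True, of y'] e by simp
    next
      case False
      then show ?thesis using y y' by (cases p) (simp add: PiE_def extensional_def)
    qed
  qed
qed

lemma configs_Psi: "configs n = Psi n ` PiE (pairs n) (\<lambda>_. UNIV)"
proof
  show "Psi n ` PiE (pairs n) (\<lambda>_. UNIV) \<subseteq> configs n"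
    unfolding configs_def Psi_def pairs_def by auto
  show "configs n \<subseteq> Psi n ` PiE (pairs n) (\<lambda>_. UNIV)"
  proof
    fix a assume a: "a \<in> configs n"
    let ?y = "restrict (Yp a) (pairs n)"
    have "Psi n ?y = a"
    proof (intro ext)
      fix i j
      show "Psi n ?y i j = a i j"
        using a unfolding Psi_def Yp_def configs_def pairs_def
        by (cases "i < j"; cases "j < i") auto
    qed
    moreover have "?y \<in> PiE (pairs n) (\<lambda>_. UNIV)" by auto
    ultimately show "a \<in> Psi n ` PiE (pairs n) (\<lambda>_. UNIV)" by (metis image_eqI)
  qed
qed

lemma finite_configs: "finite (configs n)"
  unfolding configs_Psi by (intro finite_imageI finite_PiE finite_pairs) auto

lemma lik_eq: "lik n \<theta> a = (\<Prod>p\<in>pairs n. gp \<theta> p (Yp a p))"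
  unfolding lik_def gp_def Yp_def by (cases \<theta>) (auto simp: case_prod_beta intro!: prod.cong)

lemma Ex_prod:
  "Ex n \<theta> (\<lambda>a. \<Prod>p\<in>pairs n. f p (Yp a p)) = (\<Prod>p\<in>pairs n. \<Sum>k\<in>UNIV. gp \<theta> p k * f p k)"
proof -
  have "Ex n \<theta> (\<lambda>a. \<Prod>p\<in>pairs n. f p (Yp a p))
      = (\<Sum>y\<in>PiE (pairs n) (\<lambda>_. UNIV). lik n \<theta> (Psi n y) * (\<Prod>p\<in>pairs n. f p (Yp (Psi n y) p)))"
    unfolding Ex_def configs_Psi by (subst sum.reindex[OF inj_Psi]) simp
  also have "\<dots> = (\<Sum>y\<in>PiE (pairs n) (\<lambda>_. UNIV). \<Prod>p\<in>pairs n. gp \<theta> p (y p) * f p (y p))"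
    by (intro sum.cong refl) (simp add: lik_eq Yp_Psi prod.distrib cong: prod.cong)
  also have "\<dots> = (\<Prod>p\<in>pairs n. \<Sum>k\<in>UNIV. gp \<theta> p k * f p k)"
    by (rule prod_sum_PiE[symmetric]) (auto simp: finite_pairs)
  finally show ?thesis .
qed

lemma UNIV_bb: "(UNIV :: (bool \<times> bool) set) = {(False,False),(False,True),(True,False),(True,True)}"
  by auto

lemma sum_bb: "(\<Sum>k\<in>(UNIV :: (bool \<times> bool) set). f k) = f (False,False) + f (False,True) + f (True,False) + f (True,True)"
  unfolding UNIV_bb by (simp add: add.assoc)

lemma dyad_Z_pos: "dyad_Z ai bi aj bj rho > 0"
  unfolding dyad_Z_def dyad_num_def UNIV_bool by (simp add: add_pos_pos)

lemma dyad_g_pos: "dyad_g x y ai bi aj bj rho > 0"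
  unfolding dyad_g_def using dyad_Z_pos by (simp add: dyad_num_def)

lemma dyad_g_sum: "(\<Sum>x\<in>UNIV. \<Sum>y\<in>UNIV. dyad_g x y ai bi aj bj rho) = 1"
proof -
  have "(\<Sum>x\<in>UNIV. \<Sum>y\<in>UNIV. dyad_g x y ai bi aj bj rho) = dyad_Z ai bi aj bj rho / dyad_Z ai bi aj bj rho"
    unfolding dyad_g_def dyad_Z_def by (simp only: sum_divide_distrib[symmetric])
  thus ?thesis using dyad_Z_pos[of ai bi aj bj rho] by simp
qed

lemma gp_pos: "gp \<theta> p k > 0"
  unfolding gp_def by (cases \<theta>) (auto simp: dyad_g_pos)

lemma gp_sum: "(\<Sum>k\<in>UNIV. gp \<theta> p k) = 1"
proof -
  obtain al be rho where t: "\<theta> = (al,be,rho)" by (cases \<theta>) auto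
  show ?thesis using dyad_g_sum[of "al (fst p)" "be (fst p)" "al (snd p)" "be (snd p)" rho]
    unfolding gp_def t sum_bb by (simp add: UNIV_bool add.assoc)
qed

lemma lik_nonneg: "lik n \<theta> a \<ge> 0"
  unfolding lik_eq by (intro prod_nonneg) (auto intro: less_imp_le gp_pos)

lemma Ex_sum: "finite I \<Longrightarrow> Ex n \<theta> (\<lambda>a. \<Sum>i\<in>I. F i a) = (\<Sum>i\<in>I. Ex n \<theta> (F i))"
  unfolding Ex_def by (simp add: sum_distrib_left sum.swap[of _ I])

lemma Ex_add: "Ex n \<theta> (\<lambda>a. F a + G a) = Ex n \<theta> F + Ex n \<theta> G"
  unfolding Ex_def by (simp add: distrib_left sum.distrib)

lemma Ex_mono: "(\<And>a. a \<in> configs n \<Longrightarrow> F a \<le> G a) \<Longrightarrow> Ex n \<theta> F \<le> Ex n \<theta> G"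
  unfolding Ex_def by (intro sum_mono mult_left_mono) (auto simp: lik_nonneg)

lemma Ex_single:
  assumes p: "p \<in> pairs n"
  shows "Ex n \<theta> (\<lambda>a. h (Yp a p)) = (\<Sum>k\<in>UNIV. gp \<theta> p k * h k)"
proof -
  have eq: "(\<Prod>r\<in>pairs n. (if r = p then h else (\<lambda>_. 1)) (Yp a r)) = h (Yp a p)" for a
  proof -
    have "(\<Prod>r\<in>pairs n. (if r = p then h else (\<lambda>_. 1)) (Yp a r)) = (\<Prod>r\<in>pairs n. if r = p then h (Yp a r) else 1)"
      by (intro prod.cong) auto
    thus ?thesis using p by (simp add: finite_pairs)
  qed
  have "Ex n \<theta> (\<lambda>a. h (Yp a p)) = Ex n \<theta> (\<lambda>a. \<Prod>r\<in>pairs n. (if r = p then h else (\<lambda>_. 1)) (Yp a r))"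
    by (simp only: eq)
  also have "\<dots> = (\<Prod>r\<in>pairs n. \<Sum>k\<in>UNIV. gp \<theta> r k * (if r = p then h else (\<lambda>_. 1)) k)"
    by (rule Ex_prod)
  also have "\<dots> = (\<Prod>r\<in>pairs n. if r = p then (\<Sum>k\<in>UNIV. gp \<theta> p k * h k) else 1)"
    by (intro prod.cong refl) (auto simp: gp_sum)
  also have "\<dots> = (\<Sum>k\<in>UNIV. gp \<theta> p k * h k)" using p by (simp add: finite_pairs)
  finally show ?thesis .
qed

lemma Ex_two:
  assumes p: "p \<in> pairs n" and q: "q \<in> pairs n" and pq: "p \<noteq> q"
  shows "Ex n \<theta> (\<lambda>a. h1 (Yp a p) * h2 (Yp a q)) = (\<Sum>k\<in>UNIV. gp \<theta> p k * h1 k) * (\<Sum>k\<in>UNIV. gp \<theta> q k * h2 k)"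
proof -
  define f where "f = (\<lambda>r. if r = p then h1 else if r = q then h2 else (\<lambda>_::bool\<times>bool. 1::real))"
  have "\<And>a. (\<Prod>r\<in>pairs n. f r (Yp a r)) = h1 (Yp a p) * h2 (Yp a q)"
  proof -
    fix a
    have "(\<Prod>r\<in>pairs n. f r (Yp a r)) = (\<Prod>r\<in>pairs n. (if r = p then h1 (Yp a r) else 1) * (if r = q then h2 (Yp a r) else 1))"
      unfolding f_def using pq by (intro prod.cong refl) auto
    also have "\<dots> = h1 (Yp a p) * h2 (Yp a q)" using p q by (simp add: prod.distrib finite_pairs)
    finally show "(\<Prod>r\<in>pairs n. f r (Yp a r)) = h1 (Yp a p) * h2 (Yp a q)" .
  qed
  hence "Ex n \<theta> (\<lambda>a. h1 (Yp a p) * h2 (Yp a q)) = Ex n \<theta> (\<lambda>a. \<Prod>r\<in>pairs n. f r (Yp a r))" by simp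
  also have "\<dots> = (\<Prod>r\<in>pairs n. \<Sum>k\<in>UNIV. gp \<theta> r k * f r k)" by (rule Ex_prod)
  also have "\<dots> = (\<Prod>r\<in>pairs n. (if r = p then (\<Sum>k\<in>UNIV. gp \<theta> p k * h1 k) else 1) * (if r = q then (\<Sum>k\<in>UNIV. gp \<theta> q k * h2 k) else 1))"
    unfolding f_def using pq by (intro prod.cong refl) (auto simp: gp_sum)
  also have "\<dots> = (\<Sum>k\<in>UNIV. gp \<theta> p k * h1 k) * (\<Sum>k\<in>UNIV. gp \<theta> q k * h2 k)"
    using p q by (simp add: prod.distrib finite_pairs)
  finally show ?thesis .
qed

lemma Ex_sq:
  assumes cent: "\<And>p. p \<in> pairs n \<Longrightarrow> (\<Sum>k\<in>UNIV. gp \<theta> p k * h p k) = 0"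
  shows "Ex n \<theta> (\<lambda>a. (\<Sum>p\<in>pairs n. h p (Yp a p))^2) = (\<Sum>p\<in>pairs n. \<Sum>k\<in>UNIV. gp \<theta> p k * (h p k)^2)"
proof -
  have "Ex n \<theta> (\<lambda>a. (\<Sum>p\<in>pairs n. h p (Yp a p))^2) = Ex n \<theta> (\<lambda>a. \<Sum>p\<in>pairs n. \<Sum>q\<in>pairs n. h p (Yp a p) * h q (Yp a q))"
    by (simp add: power2_eq_square sum_product)
  also have "\<dots> = (\<Sum>p\<in>pairs n. \<Sum>q\<in>pairs n. Ex n \<theta> (\<lambda>a. h p (Yp a p) * h q (Yp a q)))"
    by (simp add: Ex_sum finite_pairs)
  also have "\<dots> = (\<Sum>p\<in>pairs n. \<Sum>q\<in>pairs n. if q = p then (\<Sum>k\<in>UNIV. gp \<theta> p k * (h p k)^2) else 0)"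
  proof (intro sum.cong refl)
    fix p q assume p: "p \<in> pairs n" and q: "q \<in> pairs n"
    show "Ex n \<theta> (\<lambda>a. h p (Yp a p) * h q (Yp a q)) = (if q = p then (\<Sum>k\<in>UNIV. gp \<theta> p k * (h p k)^2) else 0)"
    proof (cases "q = p")
      case True
      then show ?thesis using Ex_single[OF p, of \<theta> "\<lambda>k. (h p k)^2"] by (simp add: power2_eq_square)
    next
      case False
      then show ?thesis using Ex_two[OF p q, of \<theta> "h p" "h q"] cent[OF p] by auto
    qed
  qed
  also have "\<dots> = (\<Sum>p\<in>pairs n. \<Sum>k\<in>UNIV. gp \<theta> p k * (h p k)^2)"
    by (simp add: finite_pairs)
  finally show ?thesis .
qed

lemma markov:
  assumes t: "t > 0" and nn: "\<And>a. a \<in> configs n \<Longrightarrow> F a \<ge> 0"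
  shows "prob n \<theta> (\<lambda>a. t < F a) \<le> Ex n \<theta> F / t"
proof -
  have "prob n \<theta> (\<lambda>a. t < F a) = (\<Sum>a\<in>{a\<in>configs n. t < F a}. lik n \<theta> a)" unfolding prob_def ..
  also have "\<dots> \<le> (\<Sum>a\<in>{a\<in>configs n. t < F a}. lik n \<theta> a * F a / t)"
  proof (intro sum_mono)
    fix a assume "a \<in> {a\<in>configs n. t < F a}"
    hence "1 \<le> F a / t" using t by simp
    hence "lik n \<theta> a * 1 \<le> lik n \<theta> a * (F a / t)" by (intro mult_left_mono) (auto simp: lik_nonneg)
    thus "lik n \<theta> a \<le> lik n \<theta> a * F a / t" by simp
  qed
  also have "\<dots> \<le> (\<Sum>a\<in>configs n. lik n \<theta> a * F a / t)"
    by (intro sum_mono2 finite_configs) (auto simp: lik_nonneg nn t less_imp_le)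
  also have "\<dots> = Ex n \<theta> F / t" unfolding Ex_def by (simp add: sum_divide_distrib)
  finally show ?thesis .
qed



lemma PE:
  fixes P Q m :: real
  assumes m: "m > 0" and P: "m \<le> P" "P \<le> 1" and Q: "m \<le> Q" "Q \<le> 1"
  shows "P * (ln Q - ln P) \<le> (Q - P) - m^2/4 * (ln Q - ln P)^2"
proof -
  have Pp: "P > 0" and Qp: "Q > 0" using m P Q by auto
  have l1: "\<bar>ln Q - ln P\<bar> \<le> \<bar>Q - P\<bar> / m"
  proof (cases "Q \<ge> P")
    case True
    have "ln Q - ln P = ln (Q / P)" using Pp Qp by (simp add: ln_div)
    also have "\<dots> \<le> Q / P - 1" using Pp Qp by (intro ln_le_minus_one) auto
    also have "\<dots> = (Q - P) / P" using Pp by (simp add: field_simps)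
    also have "\<dots> \<le> (Q - P) / m" using True P m by (intro divide_left_mono) auto
    finally show ?thesis using True Pp Qp by auto
  next
    case False
    have "ln P - ln Q = ln (P / Q)" using Pp Qp by (simp add: ln_div)
    also have "\<dots> \<le> P / Q - 1" using Pp Qp by (intro ln_le_minus_one) auto
    also have "\<dots> = (P - Q) / Q" using Qp by (simp add: field_simps)
    also have "\<dots> \<le> (P - Q) / m" using False Q m by (intro divide_left_mono) auto
    finally show ?thesis using False Pp Qp by auto
  qed
  have l1': "(ln Q - ln P)^2 * m^2 \<le> (Q - P)^2"
  proof -
    have "\<bar>ln Q - ln P\<bar> * m \<le> \<bar>Q - P\<bar>" using l1 m by (simp add: field_simps)
    hence "(\<bar>ln Q - ln P\<bar> * m)^2 \<le> \<bar>Q - P\<bar>^2" by (intro power_mono) (use m in auto)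
    thus ?thesis by (simp add: power_mult_distrib)
  qed
  define a where "a = sqrt P"
  define b where "b = sqrt Q"
  have a: "a > 0" "a \<le> 1" "a^2 = P" using Pp P unfolding a_def by auto
  have b: "b > 0" "b \<le> 1" "b^2 = Q" using Qp Q unfolding b_def by auto
  have l2: "(Q - P)^2 \<le> 4 * (b - a)^2"
  proof -
    have "(Q - P)^2 = (b - a)^2 * (b + a)^2" using a b by (simp add: power2_eq_square algebra_simps)
    also have "\<dots> \<le> (b - a)^2 * 2^2" using a b by (intro mult_left_mono power_mono) auto
    finally show ?thesis by simp
  qed
  have l3: "ln Q - ln P \<le> 2 * (b / a - 1)"
  proof -
    have "ln Q = 2 * ln b" using b ln_realpow[of b 2] by simp
    moreover have "ln P = 2 * ln a" using a ln_realpow[of a 2] by simp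
    moreover have "ln (b / a) = ln b - ln a" using a b by (simp add: ln_div)
    ultimately have "ln Q - ln P = 2 * ln (b / a)" by simp
    also have "\<dots> \<le> 2 * (b / a - 1)" using a b ln_le_minus_one[of "b/a"] by simp
    finally show ?thesis .
  qed
  have "P * (ln Q - ln P) \<le> P * (2 * (b / a - 1))" using l3 Pp by (intro mult_left_mono) auto
  also have "\<dots> = (Q - P) - (b - a)^2" using a b by (simp add: power2_eq_square field_simps)
  also have "\<dots> \<le> (Q - P) - m^2/4 * (ln Q - ln P)^2" using l1' l2 by (simp add: field_simps)
  finally show ?thesis .
qed



definition lin :: "real \<Rightarrow> real \<Rightarrow> real \<Rightarrow> bool \<Rightarrow> bool \<Rightarrow> real" where
  "lin e1 e2 e3 x y = e1 * of_bool x + e2 * of_bool y + e3 * of_bool x * of_bool y"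

definition pZ :: "real \<Rightarrow> real \<Rightarrow> real \<Rightarrow> real" where
  "pZ e1 e2 e3 = exp (lin e1 e2 e3 False False) + exp (lin e1 e2 e3 False True)
     + exp (lin e1 e2 e3 True False) + exp (lin e1 e2 e3 True True)"

definition pg :: "real \<Rightarrow> real \<Rightarrow> real \<Rightarrow> bool \<Rightarrow> bool \<Rightarrow> real" where
  "pg e1 e2 e3 x y = exp (lin e1 e2 e3 x y) / pZ e1 e2 e3"

lemma dyad_g_pg: "dyad_g x y ai bi aj bj rho = pg (ai+bj) (bi+aj) rho x y"
  unfolding dyad_g_def pg_def dyad_num_def dyad_Z_def pZ_def lin_def UNIV_bool
  by (simp add: add.assoc)

lemma pZ_pos: "pZ e1 e2 e3 > 0"
  unfolding pZ_def by (intro add_pos_pos) auto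

lemma ln_pg: "ln (pg e1 e2 e3 x y) = lin e1 e2 e3 x y - ln (pZ e1 e2 e3)"
  unfolding pg_def using pZ_pos[of e1 e2 e3] by (simp add: ln_div)

lemma pg_sum: "pg e1 e2 e3 False False + pg e1 e2 e3 False True + pg e1 e2 e3 True False + pg e1 e2 e3 True True = 1"
  unfolding pg_def using pZ_pos[of e1 e2 e3] by (simp add: add_divide_distrib[symmetric] pZ_def)

lemma lin_abs: "\<bar>lin e1 e2 e3 x y\<bar> \<le> \<bar>e1\<bar> + \<bar>e2\<bar> + \<bar>e3\<bar>"
  unfolding lin_def by (cases x; cases y) auto

lemma pg_bounds:
  assumes "\<bar>e1\<bar> \<le> 2*B" "\<bar>e2\<bar> \<le> 2*B" "\<bar>e3\<bar> \<le> B"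
  shows "exp (-10*B) / 4 \<le> pg e1 e2 e3 x y" "pg e1 e2 e3 x y \<le> 1"
proof -
  have L: "\<bar>lin e1 e2 e3 u v\<bar> \<le> 5*B" for u v using lin_abs[of e1 e2 e3 u v] assms by linarith
  have lo: "exp (-5*B) \<le> exp (lin e1 e2 e3 u v)" for u v using L[of u v] by auto
  have hi: "exp (lin e1 e2 e3 u v) \<le> exp (5*B)" for u v using L[of u v] by auto
  have Zhi: "pZ e1 e2 e3 \<le> 4 * exp (5*B)" unfolding pZ_def using hi[of False False] hi[of False True] hi[of True False] hi[of True True] by linarith
  have Zge: "exp (lin e1 e2 e3 x y) \<le> pZ e1 e2 e3"
    unfolding pZ_def by (cases x; cases y) (auto simp: add_increasing add_increasing2 add_nonneg_nonneg)
  have Zp: "pZ e1 e2 e3 > 0" by (rule pZ_pos)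
  show "pg e1 e2 e3 x y \<le> 1" unfolding pg_def using Zge Zp by simp
  have "exp (-5*B - 5*B) = exp (-5*B) / exp (5*B)" by (rule exp_diff)
  hence "exp (-10*B) / 4 = exp (-5*B) / (4 * exp (5*B))" by simp
  also have "\<dots> \<le> exp (lin e1 e2 e3 x y) / pZ e1 e2 e3"
    using lo[of x y] Zhi Zp by (intro frac_le) auto
  finally show "exp (-10*B) / 4 \<le> pg e1 e2 e3 x y" unfolding pg_def .
qed

lemma four_sq: "(a - b - c + d)^2 \<le> 4 * (a^2 + b^2 + c^2 + (d::real)^2)"
proof -
  have "4 * (a^2 + b^2 + c^2 + d^2) - (a - b - c + d)^2 = (a+b)^2+(a+c)^2+(a-d)^2+(b-c)^2+(b+d)^2+(c+d)^2"
    by (simp add: power2_eq_square algebra_simps)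
  moreover have "(a+b)^2+(a+c)^2+(a-d)^2+(b-c)^2+(b+d)^2+(c+d)^2 \<ge> 0" by simp
  ultimately show ?thesis by linarith
qed

lemma two_sq: "(a - b)^2 \<le> 2 * (a^2 + (b::real)^2)"
proof -
  have "2 * (a^2 + b^2) - (a - b)^2 = (a+b)^2" by (simp add: power2_eq_square algebra_simps)
  thus ?thesis by (metis diff_ge_0_iff_ge zero_le_power2)
qed

lemma eight_sq: "(a - b)^2 + (c - b)^2 + (d - a - c + b)^2 \<le> 8 * (b^2 + c^2 + a^2 + (d::real)^2)"
proof -
  have h1: "(a - b)^2 \<le> 2 * (a^2 + b^2)" by (rule two_sq)
  have h2: "(c - b)^2 \<le> 2 * (c^2 + b^2)" by (rule two_sq)
  have h3: "(d - a - c + b)^2 \<le> 4 * (d^2 + a^2 + c^2 + b^2)" by (rule four_sq)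
  have "b^2 \<ge> 0" "c^2 \<ge> 0" "a^2 \<ge> 0" "d^2 \<ge> 0" by auto
  moreover have gen: "\<And>x y z A B C D :: real. x \<le> 2*(A+B) \<Longrightarrow> y \<le> 2*(C+B) \<Longrightarrow> z \<le> 4*(D+A+C+B)
     \<Longrightarrow> 0 \<le> A \<Longrightarrow> 0 \<le> B \<Longrightarrow> 0 \<le> C \<Longrightarrow> 0 \<le> D \<Longrightarrow> x + y + z \<le> 8*(B+C+A+D)" by (simp add: algebra_simps)
  ultimately show ?thesis using gen[OF h1 h2 h3] by simp
qed

lemma DL:
  assumes B: "B > 0"
    and e: "\<bar>e1\<bar> \<le> 2*B" "\<bar>e2\<bar> \<le> 2*B" "\<bar>e3\<bar> \<le> B"
    and f: "\<bar>f1\<bar> \<le> 2*B" "\<bar>f2\<bar> \<le> 2*B" "\<bar>f3\<bar> \<le> B"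
  shows "ln (pg f1 f2 f3 x y) - ln (pg e1 e2 e3 x y) \<le>
      (f1-e1) * (of_bool x - (pg e1 e2 e3 True False + pg e1 e2 e3 True True))
    + (f2-e2) * (of_bool y - (pg e1 e2 e3 False True + pg e1 e2 e3 True True))
    + (f3-e3) * (of_bool x * of_bool y - pg e1 e2 e3 True True)
    - (exp (-10*B) / 4)^2 / 32 * ((f1-e1)^2 + (f2-e2)^2 + (f3-e3)^2)"
proof -
  define m where "m = exp (-10*B) / 4"
  have m: "m > 0" unfolding m_def by simp
  define P where "P = pg e1 e2 e3"
  define Q where "Q = pg f1 f2 f3"
  define D where "D = (\<lambda>u v. ln (Q u v) - ln (P u v))"
  define c0 where "c0 = ln (pZ e1 e2 e3) - ln (pZ f1 f2 f3)"
  have Dform: "D u v = (f1-e1) * of_bool u + (f2-e2) * of_bool v + (f3-e3) * of_bool u * of_bool v + c0" for u v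
    unfolding D_def P_def Q_def ln_pg c0_def lin_def by (simp add: algebra_simps)
  have PE4: "P u v * D u v \<le> (Q u v - P u v) - m^2/4 * (D u v)^2" for u v
    unfolding D_def using PE[OF m] pg_bounds[OF e, of u v] pg_bounds[OF f, of u v]
    unfolding m_def P_def Q_def by blast
  have sP: "P False False + P False True + P True False + P True True = 1" unfolding P_def by (rule pg_sum)
  have sQ: "Q False False + Q False True + Q True False + Q True True = 1" unfolding Q_def by (rule pg_sum)
  have S: "P False False * D False False + P False True * D False True + P True False * D True False + P True True * D True True
      \<le> -(m^2/4 * ((D False False)^2 + (D False True)^2 + (D True False)^2 + (D True True)^2))"
    using PE4[of False False] PE4[of False True] PE4[of True False] PE4[of True True] sP sQ
    by (simp add: algebra_simps)
  have lhs: "P False False * D False False + P False True * D False True + P True False * D True False + P True True * D True True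
      = c0 + (f1-e1) * (P True False + P True True) + (f2-e2) * (P False True + P True True) + (f3-e3) * P True True"
  proof -
    have "P False False * D False False + P False True * D False True + P True False * D True False + P True True * D True True
      = c0 * (P False False + P False True + P True False + P True True) + (f1-e1) * (P True False + P True True) + (f2-e2) * (P False True + P True True) + (f3-e3) * P True True"
      unfolding Dform by (simp add: algebra_simps)
    thus ?thesis using sP by simp
  qed
  have sq: "(f1-e1)^2 + (f2-e2)^2 + (f3-e3)^2 \<le> 8 * ((D False False)^2 + (D False True)^2 + (D True False)^2 + (D True True)^2)"
  proof -
    have d1: "f1 - e1 = D True False - D False False" unfolding Dform by simp
    have d2: "f2 - e2 = D False True - D False False" unfolding Dform by simp
    have d3: "f3 - e3 = D True True - D True False - D False True + D False False" unfolding Dform by simp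
    show ?thesis unfolding d1 d2 d3 by (rule eight_sq)
  qed
  have key: "c0 + (f1-e1) * (P True False + P True True) + (f2-e2) * (P False True + P True True) + (f3-e3) * P True True
      \<le> -(m^2/32 * ((f1-e1)^2 + (f2-e2)^2 + (f3-e3)^2))"
  proof -
    have "m^2/32 * ((f1-e1)^2 + (f2-e2)^2 + (f3-e3)^2) \<le> m^2/32 * (8 * ((D False False)^2 + (D False True)^2 + (D True False)^2 + (D True True)^2))"
      using sq m by (intro mult_left_mono) auto
    thus ?thesis using S lhs by (simp add: algebra_simps)
  qed
  have "ln (Q x y) - ln (P x y) = D x y" unfolding D_def ..
  also have "\<dots> = (f1-e1) * of_bool x + (f2-e2) * of_bool y + (f3-e3) * of_bool x * of_bool y + c0" by (rule Dform)
  finally show ?thesis using key unfolding P_def[symmetric] Q_def[symmetric] m_def[symmetric]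
    by (simp add: algebra_simps)
qed



definition ex1 :: "params \<Rightarrow> nat \<times> nat \<Rightarrow> real" where
  "ex1 \<theta> p = (\<Sum>\<kappa>\<in>UNIV. gp \<theta> p \<kappa> * of_bool (fst \<kappa>))"
definition ex2 :: "params \<Rightarrow> nat \<times> nat \<Rightarrow> real" where
  "ex2 \<theta> p = (\<Sum>\<kappa>\<in>UNIV. gp \<theta> p \<kappa> * of_bool (snd \<kappa>))"
definition ex3 :: "params \<Rightarrow> nat \<times> nat \<Rightarrow> real" where
  "ex3 \<theta> p = (\<Sum>\<kappa>\<in>UNIV. gp \<theta> p \<kappa> * (of_bool (fst \<kappa>) * of_bool (snd \<kappa>)))"

definition cX :: "params \<Rightarrow> nat \<Rightarrow> nat \<times> nat \<Rightarrow> bool \<times> bool \<Rightarrow> real" where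
  "cX \<theta> k p \<kappa> = (if fst p = k then of_bool (fst \<kappa>) - ex1 \<theta> p else 0) + (if snd p = k then of_bool (snd \<kappa>) - ex2 \<theta> p else 0)"
definition cY :: "params \<Rightarrow> nat \<Rightarrow> nat \<times> nat \<Rightarrow> bool \<times> bool \<Rightarrow> real" where
  "cY \<theta> k p \<kappa> = (if snd p = k then of_bool (fst \<kappa>) - ex1 \<theta> p else 0) + (if fst p = k then of_bool (snd \<kappa>) - ex2 \<theta> p else 0)"
definition cZ :: "params \<Rightarrow> nat \<times> nat \<Rightarrow> bool \<times> bool \<Rightarrow> real" where
  "cZ \<theta> p \<kappa> = of_bool (fst \<kappa>) * of_bool (snd \<kappa>) - ex3 \<theta> p"

definition Xn :: "nat \<Rightarrow> params \<Rightarrow> nat \<Rightarrow> adj \<Rightarrow> real" where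
  "Xn n \<theta> k a = (\<Sum>p\<in>pairs n. cX \<theta> k p (Yp a p))"
definition Yn :: "nat \<Rightarrow> params \<Rightarrow> nat \<Rightarrow> adj \<Rightarrow> real" where
  "Yn n \<theta> k a = (\<Sum>p\<in>pairs n. cY \<theta> k p (Yp a p))"
definition Zn :: "nat \<Rightarrow> params \<Rightarrow> adj \<Rightarrow> real" where
  "Zn n \<theta> a = (\<Sum>p\<in>pairs n. cZ \<theta> p (Yp a p))"
definition Wn :: "nat \<Rightarrow> params \<Rightarrow> adj \<Rightarrow> real" where
  "Wn n \<theta> a = (\<Sum>k=1..n. (Xn n \<theta> k a)^2 + (Yn n \<theta> k a)^2) + (Zn n \<theta> a)^2"

lemma ex_le1:
  assumes "\<And>\<kappa>. 0 \<le> f \<kappa>" "\<And>\<kappa>. f \<kappa> \<le> 1"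
  shows "0 \<le> (\<Sum>\<kappa>\<in>UNIV. gp \<theta> p \<kappa> * f \<kappa>)" "(\<Sum>\<kappa>\<in>UNIV. gp \<theta> p \<kappa> * f \<kappa>) \<le> 1"
proof -
  show "0 \<le> (\<Sum>\<kappa>\<in>UNIV. gp \<theta> p \<kappa> * f \<kappa>)" by (intro sum_nonneg mult_nonneg_nonneg less_imp_le[OF gp_pos] assms)
  have "(\<Sum>\<kappa>\<in>UNIV. gp \<theta> p \<kappa> * f \<kappa>) \<le> (\<Sum>\<kappa>\<in>UNIV. gp \<theta> p \<kappa> * 1)"
    by (intro sum_mono mult_left_mono less_imp_le[OF gp_pos] assms)
  thus "(\<Sum>\<kappa>\<in>UNIV. gp \<theta> p \<kappa> * f \<kappa>) \<le> 1" using gp_sum by simp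
qed

lemma ex1_b: "0 \<le> ex1 \<theta> p" "ex1 \<theta> p \<le> 1" unfolding ex1_def by (rule ex_le1; simp)+
lemma ex2_b: "0 \<le> ex2 \<theta> p" "ex2 \<theta> p \<le> 1" unfolding ex2_def by (rule ex_le1; simp)+
lemma ex3_b: "0 \<le> ex3 \<theta> p" "ex3 \<theta> p \<le> 1" unfolding ex3_def by (rule ex_le1; simp)+

lemma cent_gen: "(\<Sum>\<kappa>\<in>UNIV. gp \<theta> p \<kappa> * (f \<kappa> - (\<Sum>\<kappa>\<in>UNIV. gp \<theta> p \<kappa> * f \<kappa>))) = 0"
proof -
  have "(\<Sum>\<kappa>\<in>UNIV. gp \<theta> p \<kappa> * (f \<kappa> - (\<Sum>\<kappa>\<in>UNIV. gp \<theta> p \<kappa> * f \<kappa>)))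
     = (\<Sum>\<kappa>\<in>UNIV. gp \<theta> p \<kappa> * f \<kappa>) - (\<Sum>\<kappa>\<in>UNIV. gp \<theta> p \<kappa>) * (\<Sum>\<kappa>\<in>UNIV. gp \<theta> p \<kappa> * f \<kappa>)"
    by (simp add: right_diff_distrib sum_subtractf sum_distrib_right)
  thus ?thesis using gp_sum by simp
qed

lemma cent_X: "(\<Sum>\<kappa>\<in>UNIV. gp \<theta> p \<kappa> * cX \<theta> k p \<kappa>) = 0"
proof -
  have "(\<Sum>\<kappa>\<in>UNIV. gp \<theta> p \<kappa> * cX \<theta> k p \<kappa>)
    = (if fst p = k then (\<Sum>\<kappa>\<in>UNIV. gp \<theta> p \<kappa> * (of_bool (fst \<kappa>) - ex1 \<theta> p)) else 0)
    + (if snd p = k then (\<Sum>\<kappa>\<in>UNIV. gp \<theta> p \<kappa> * (of_bool (snd \<kappa>) - ex2 \<theta> p)) else 0)"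
    unfolding cX_def by (simp add: distrib_left sum.distrib)
  thus ?thesis unfolding ex1_def ex2_def by (simp only: cent_gen) simp
qed

lemma cent_Y: "(\<Sum>\<kappa>\<in>UNIV. gp \<theta> p \<kappa> * cY \<theta> k p \<kappa>) = 0"
proof -
  have "(\<Sum>\<kappa>\<in>UNIV. gp \<theta> p \<kappa> * cY \<theta> k p \<kappa>)
    = (if snd p = k then (\<Sum>\<kappa>\<in>UNIV. gp \<theta> p \<kappa> * (of_bool (fst \<kappa>) - ex1 \<theta> p)) else 0)
    + (if fst p = k then (\<Sum>\<kappa>\<in>UNIV. gp \<theta> p \<kappa> * (of_bool (snd \<kappa>) - ex2 \<theta> p)) else 0)"
    unfolding cY_def by (simp add: distrib_left sum.distrib)
  thus ?thesis unfolding ex1_def ex2_def by (simp only: cent_gen) simp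
qed

lemma cent_Z: "(\<Sum>\<kappa>\<in>UNIV. gp \<theta> p \<kappa> * cZ \<theta> p \<kappa>) = 0"
  unfolding cZ_def ex3_def by (rule cent_gen)

lemma ob_abs: "0 \<le> e \<Longrightarrow> e \<le> 1 \<Longrightarrow> (of_bool b - e)^2 \<le> (1::real)"
  by (cases b) (auto simp: power2_eq_square mult_le_one)

lemma sq_if2:
  assumes "A^2 \<le> 1" "C^2 \<le> (1::real)"
  shows "((if c1 then A else 0) + (if c2 then C else 0))^2 \<le> 2 * (if c1 then 1 else 0) + 2 * (if c2 then 1 else 0)"
proof -
  have "(A + C)^2 \<le> 2 * (A^2 + C^2)" using two_sq[of A "-C"] by simp
  thus ?thesis using assms by (cases c1; cases c2) auto
qed

lemma sum_delta_le: "(\<Sum>k\<in>{1..(n::nat)}. if c = k then (1::real) else 0) \<le> 1"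
  by (cases "c \<in> {1..n}") (simp_all add: sum.delta')

lemma sumk_cX: "(\<Sum>k\<in>{1..n}. (cX \<theta> k p \<kappa>)^2) \<le> 4"
proof -
  have "(\<Sum>k\<in>{1..n}. (cX \<theta> k p \<kappa>)^2) \<le> (\<Sum>k\<in>{1..n}. 2 * (if fst p = k then 1 else 0) + 2 * (if snd p = k then 1 else 0))"
    unfolding cX_def by (intro sum_mono sq_if2 ob_abs ex1_b ex2_b)
  also have "\<dots> \<le> 4" using sum_delta_le[of n "fst p"] sum_delta_le[of n "snd p"]
    by (simp add: sum.distrib sum_distrib_left[symmetric] del: sum.delta)
  finally show ?thesis .
qed

lemma sumk_cY: "(\<Sum>k\<in>{1..n}. (cY \<theta> k p \<kappa>)^2) \<le> 4"
proof -
  have "(\<Sum>k\<in>{1..n}. (cY \<theta> k p \<kappa>)^2) \<le> (\<Sum>k\<in>{1..n}. 2 * (if snd p = k then 1 else 0) + 2 * (if fst p = k then 1 else 0))"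
    unfolding cY_def by (intro sum_mono sq_if2 ob_abs ex1_b ex2_b)
  also have "\<dots> \<le> 4" using sum_delta_le[of n "fst p"] sum_delta_le[of n "snd p"]
    by (simp add: sum.distrib sum_distrib_left[symmetric] del: sum.delta)
  finally show ?thesis .
qed

lemma cZ_sq: "(cZ \<theta> p \<kappa>)^2 \<le> 1"
  unfolding cZ_def using ex3_b[of \<theta> p] by (cases "fst \<kappa>"; cases "snd \<kappa>") (auto simp: power2_eq_square mult_le_one)

lemma swap3: "(\<Sum>k\<in>K. \<Sum>p\<in>P. \<Sum>\<kappa>\<in>U. f k p \<kappa>) = (\<Sum>p\<in>P. \<Sum>\<kappa>\<in>U. \<Sum>k\<in>K. (f k p \<kappa>::real))"
proof -
  have "(\<Sum>k\<in>K. \<Sum>p\<in>P. \<Sum>\<kappa>\<in>U. f k p \<kappa>) = (\<Sum>p\<in>P. \<Sum>k\<in>K. \<Sum>\<kappa>\<in>U. f k p \<kappa>)" by (rule sum.swap)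
  also have "\<dots> = (\<Sum>p\<in>P. \<Sum>\<kappa>\<in>U. \<Sum>k\<in>K. f k p \<kappa>)" by (intro sum.cong refl) (rule sum.swap)
  finally show ?thesis .
qed

lemma EW: "Ex n \<theta> (Wn n \<theta>) \<le> 9 * (real n)^2"
proof -
  have eX: "Ex n \<theta> (\<lambda>a. (Xn n \<theta> k a)^2) = (\<Sum>p\<in>pairs n. \<Sum>\<kappa>\<in>UNIV. gp \<theta> p \<kappa> * (cX \<theta> k p \<kappa>)^2)" for k
    unfolding Xn_def by (rule Ex_sq[OF cent_X])
  have eY: "Ex n \<theta> (\<lambda>a. (Yn n \<theta> k a)^2) = (\<Sum>p\<in>pairs n. \<Sum>\<kappa>\<in>UNIV. gp \<theta> p \<kappa> * (cY \<theta> k p \<kappa>)^2)" for k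
    unfolding Yn_def by (rule Ex_sq[OF cent_Y])
  have eZ: "Ex n \<theta> (\<lambda>a. (Zn n \<theta> a)^2) = (\<Sum>p\<in>pairs n. \<Sum>\<kappa>\<in>UNIV. gp \<theta> p \<kappa> * (cZ \<theta> p \<kappa>)^2)"
    unfolding Zn_def by (rule Ex_sq[OF cent_Z])
  have "Ex n \<theta> (Wn n \<theta>) = (\<Sum>k=1..n. Ex n \<theta> (\<lambda>a. (Xn n \<theta> k a)^2) + Ex n \<theta> (\<lambda>a. (Yn n \<theta> k a)^2)) + Ex n \<theta> (\<lambda>a. (Zn n \<theta> a)^2)"
    unfolding Wn_def by (simp add: Ex_add Ex_sum)
  also have "\<dots> = (\<Sum>p\<in>pairs n. \<Sum>\<kappa>\<in>UNIV. gp \<theta> p \<kappa> * ((\<Sum>k=1..n. (cX \<theta> k p \<kappa>)^2 + (cY \<theta> k p \<kappa>)^2) + (cZ \<theta> p \<kappa>)^2))"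
  proof -
    have "(\<Sum>k=1..n. Ex n \<theta> (\<lambda>a. (Xn n \<theta> k a)^2) + Ex n \<theta> (\<lambda>a. (Yn n \<theta> k a)^2))
      = (\<Sum>k=1..n. \<Sum>p\<in>pairs n. \<Sum>\<kappa>\<in>UNIV. gp \<theta> p \<kappa> * ((cX \<theta> k p \<kappa>)^2 + (cY \<theta> k p \<kappa>)^2))"
      unfolding eX eY by (simp add: sum.distrib distrib_left)
    also have "\<dots> = (\<Sum>p\<in>pairs n. \<Sum>\<kappa>\<in>UNIV. \<Sum>k=1..n. gp \<theta> p \<kappa> * ((cX \<theta> k p \<kappa>)^2 + (cY \<theta> k p \<kappa>)^2))"
      by (rule swap3)
    finally show ?thesis unfolding eZ
      by (simp add: sum.distrib distrib_left sum_distrib_left)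
  qed
  also have "\<dots> \<le> (\<Sum>p\<in>pairs n. \<Sum>\<kappa>\<in>UNIV. gp \<theta> p \<kappa> * 9)"
  proof (intro sum_mono mult_left_mono)
    fix p \<kappa>
    show "0 \<le> gp \<theta> p \<kappa>" using gp_pos less_imp_le by blast
    have "(\<Sum>k=1..n. (cX \<theta> k p \<kappa>)^2 + (cY \<theta> k p \<kappa>)^2) \<le> 8"
      using sumk_cX[where n=n and p=p and \<theta>=\<theta> and \<kappa>=\<kappa>] sumk_cY[where n=n and p=p and \<theta>=\<theta> and \<kappa>=\<kappa>] by (simp add: sum.distrib)
    thus "(\<Sum>k=1..n. (cX \<theta> k p \<kappa>)^2 + (cY \<theta> k p \<kappa>)^2) + (cZ \<theta> p \<kappa>)^2 \<le> 9"
      using cZ_sq[where p=p and \<theta>=\<theta> and \<kappa>=\<kappa>] by linarith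
  qed
  also have "\<dots> = 9 * real (card (pairs n))"
    by (simp add: sum_distrib_right[symmetric] gp_sum)
  also have "\<dots> \<le> 9 * (real n)^2" using card_pairs[of n]
    by (simp add: of_nat_le_iff[symmetric] del: of_nat_le_iff)
  finally show ?thesis .
qed



lemma loglik_eq: "loglik n \<theta> a = (\<Sum>p\<in>pairs n. ln (gp \<theta> p (Yp a p)))"
  unfolding loglik_def gp_def Yp_def by (cases \<theta>) (auto simp: case_prod_beta intro!: sum.cong)

lemma gp_pg: "gp (al, be, r) p k = pg (al (fst p) + be (snd p)) (be (fst p) + al (snd p)) r (fst k) (snd k)"
  unfolding gp_def by (simp add: dyad_g_pg)

lemma ex1_pg: "ex1 (al, be, r) p = pg (al (fst p) + be (snd p)) (be (fst p) + al (snd p)) r True False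
   + pg (al (fst p) + be (snd p)) (be (fst p) + al (snd p)) r True True"
  unfolding ex1_def sum_bb gp_pg by simp
lemma ex2_pg: "ex2 (al, be, r) p = pg (al (fst p) + be (snd p)) (be (fst p) + al (snd p)) r False True
   + pg (al (fst p) + be (snd p)) (be (fst p) + al (snd p)) r True True"
  unfolding ex2_def sum_bb gp_pg by simp
lemma ex3_pg: "ex3 (al, be, r) p = pg (al (fst p) + be (snd p)) (be (fst p) + al (snd p)) r True True"
  unfolding ex3_def sum_bb gp_pg by simp

lemma pairs_mem: "p \<in> pairs n \<Longrightarrow> fst p \<in> {1..n} \<and> snd p \<in> {1..n} \<and> fst p \<noteq> snd p"
  unfolding pairs_def by auto

definition cc :: "real \<Rightarrow> real" where "cc B = (exp (-10*B) / 4)^2 / 32"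

lemma cc_pos: "cc B > 0" unfolding cc_def by simp

lemma F1:
  assumes B: "B > 0"
    and s: "(als, bes, rs) \<in> param_space B n" and h: "(al, be, r) \<in> param_space B n"
    and ml: "loglik n (als, bes, rs) a \<le> loglik n (al, be, r) a"
  defines "u \<equiv> \<lambda>i. al i - als i" and "v \<equiv> \<lambda>i. be i - bes i"
  shows "cc B * (\<Sum>p\<in>pairs n. (u (fst p) + v (snd p))^2 + (v (fst p) + u (snd p))^2 + (r - rs)^2)
    \<le> (\<Sum>p\<in>pairs n. (u (fst p) + v (snd p)) * (of_bool (fst (Yp a p)) - ex1 (als, bes, rs) p)
         + (v (fst p) + u (snd p)) * (of_bool (snd (Yp a p)) - ex2 (als, bes, rs) p)
         + (r - rs) * (of_bool (fst (Yp a p)) * of_bool (snd (Yp a p)) - ex3 (als, bes, rs) p))"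
proof -
  have per: "ln (gp (al, be, r) p (Yp a p)) - ln (gp (als, bes, rs) p (Yp a p)) \<le>
      (u (fst p) + v (snd p)) * (of_bool (fst (Yp a p)) - ex1 (als, bes, rs) p)
         + (v (fst p) + u (snd p)) * (of_bool (snd (Yp a p)) - ex2 (als, bes, rs) p)
         + (r - rs) * (of_bool (fst (Yp a p)) * of_bool (snd (Yp a p)) - ex3 (als, bes, rs) p)
      - cc B * ((u (fst p) + v (snd p))^2 + (v (fst p) + u (snd p))^2 + (r - rs)^2)"
    if p: "p \<in> pairs n" for p
  proof -
    have i: "fst p \<in> {1..n}" and j: "snd p \<in> {1..n}" using pairs_mem[OF p] by auto
    have bs: "\<bar>als (fst p)\<bar> \<le> B" "\<bar>bes (fst p)\<bar> \<le> B" "\<bar>als (snd p)\<bar> \<le> B" "\<bar>bes (snd p)\<bar> \<le> B" "\<bar>rs\<bar> \<le> B"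
      using s i j unfolding param_space_def by auto
    have bh: "\<bar>al (fst p)\<bar> \<le> B" "\<bar>be (fst p)\<bar> \<le> B" "\<bar>al (snd p)\<bar> \<le> B" "\<bar>be (snd p)\<bar> \<le> B" "\<bar>r\<bar> \<le> B"
      using h i j unfolding param_space_def by auto
    have e: "\<bar>als (fst p) + bes (snd p)\<bar> \<le> 2*B" "\<bar>bes (fst p) + als (snd p)\<bar> \<le> 2*B" "\<bar>rs\<bar> \<le> B"
      using bs by auto
    have f: "\<bar>al (fst p) + be (snd p)\<bar> \<le> 2*B" "\<bar>be (fst p) + al (snd p)\<bar> \<le> 2*B" "\<bar>r\<bar> \<le> B"
      using bh by auto
    note dl = DL[OF B e f, of "fst (Yp a p)" "snd (Yp a p)"]
    show ?thesis using dl unfolding gp_pg ex1_pg ex2_pg ex3_pg u_def v_def cc_def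
      by (simp add: algebra_simps)
  qed
  have "0 \<le> loglik n (al, be, r) a - loglik n (als, bes, rs) a" using ml by simp
  also have "\<dots> = (\<Sum>p\<in>pairs n. ln (gp (al, be, r) p (Yp a p)) - ln (gp (als, bes, rs) p (Yp a p)))"
    unfolding loglik_eq by (simp add: sum_subtractf)
  also have "\<dots> \<le> (\<Sum>p\<in>pairs n. (u (fst p) + v (snd p)) * (of_bool (fst (Yp a p)) - ex1 (als, bes, rs) p)
         + (v (fst p) + u (snd p)) * (of_bool (snd (Yp a p)) - ex2 (als, bes, rs) p)
         + (r - rs) * (of_bool (fst (Yp a p)) * of_bool (snd (Yp a p)) - ex3 (als, bes, rs) p)
      - cc B * ((u (fst p) + v (snd p))^2 + (v (fst p) + u (snd p))^2 + (r - rs)^2))"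
    by (intro sum_mono per)
  finally show ?thesis by (simp add: sum_subtractf sum_distrib_left)
qed

lemma sum_if2: "a \<in> S \<Longrightarrow> b \<in> S \<Longrightarrow> finite S \<Longrightarrow>
  (\<Sum>k\<in>S. u k * ((if a = k then A else 0) + (if b = k then C else 0))) = u a * A + u b * (C::real)"
proof -
  assume "a \<in> S" "b \<in> S" "finite S"
  have "(\<Sum>k\<in>S. u k * ((if a = k then A else 0) + (if b = k then C else 0)))
      = (\<Sum>k\<in>S. (if a = k then u k * A else 0)) + (\<Sum>k\<in>S. (if b = k then u k * C else 0))"
  proof -
    have "(\<Sum>k\<in>S. u k * ((if a = k then A else 0) + (if b = k then C else 0)))
      = (\<Sum>k\<in>S. (if a = k then u k * A else 0) + (if b = k then u k * C else 0))"
      by (intro sum.cong refl) (simp add: distrib_left)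
    thus ?thesis by (simp add: sum.distrib)
  qed
  thus ?thesis using \<open>a \<in> S\<close> \<open>b \<in> S\<close> \<open>finite S\<close> by (simp add: sum.delta')
qed

lemma F2: "(\<Sum>k\<in>{1..n}. u k * Xn n \<theta> k a + v k * Yn n \<theta> k a)
  = (\<Sum>p\<in>pairs n. (u (fst p) + v (snd p)) * (of_bool (fst (Yp a p)) - ex1 \<theta> p)
         + (v (fst p) + u (snd p)) * (of_bool (snd (Yp a p)) - ex2 \<theta> p))"
proof -
  have "(\<Sum>k\<in>{1..n}. u k * Xn n \<theta> k a + v k * Yn n \<theta> k a)
     = (\<Sum>k\<in>{1..n}. \<Sum>p\<in>pairs n. u k * cX \<theta> k p (Yp a p) + v k * cY \<theta> k p (Yp a p))"
    unfolding Xn_def Yn_def by (simp add: sum_distrib_left sum.distrib)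
  also have "\<dots> = (\<Sum>p\<in>pairs n. \<Sum>k\<in>{1..n}. u k * cX \<theta> k p (Yp a p) + v k * cY \<theta> k p (Yp a p))"
    by (rule sum.swap)
  also have "\<dots> = (\<Sum>p\<in>pairs n. (u (fst p) + v (snd p)) * (of_bool (fst (Yp a p)) - ex1 \<theta> p)
         + (v (fst p) + u (snd p)) * (of_bool (snd (Yp a p)) - ex2 \<theta> p))"
  proof (intro sum.cong refl)
    fix p assume p: "p \<in> pairs n"
    have i: "fst p \<in> {1..n}" and j: "snd p \<in> {1..n}" using pairs_mem[OF p] by auto
    have "(\<Sum>k\<in>{1..n}. u k * cX \<theta> k p (Yp a p) + v k * cY \<theta> k p (Yp a p))
       = (\<Sum>k\<in>{1..n}. u k * cX \<theta> k p (Yp a p)) + (\<Sum>k\<in>{1..n}. v k * cY \<theta> k p (Yp a p))"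
      by (simp add: sum.distrib)
    also have "\<dots> = (u (fst p) * (of_bool (fst (Yp a p)) - ex1 \<theta> p) + u (snd p) * (of_bool (snd (Yp a p)) - ex2 \<theta> p))
       + (v (snd p) * (of_bool (fst (Yp a p)) - ex1 \<theta> p) + v (fst p) * (of_bool (snd (Yp a p)) - ex2 \<theta> p))"
      unfolding cX_def cY_def using i j by (simp only: sum_if2 finite_atLeastAtMost)
    finally show "(\<Sum>k\<in>{1..n}. u k * cX \<theta> k p (Yp a p) + v k * cY \<theta> k p (Yp a p))
       = (u (fst p) + v (snd p)) * (of_bool (fst (Yp a p)) - ex1 \<theta> p)
         + (v (fst p) + u (snd p)) * (of_bool (snd (Yp a p)) - ex2 \<theta> p)"
      by (simp add: algebra_simps)
  qed
  finally show ?thesis .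
qed

lemma amgm_abs: "s > 0 \<Longrightarrow> \<bar>t\<bar> \<le> (t^2 / s + s) / (2::real)"
proof -
  assume s: "s > 0"
  have "0 \<le> (\<bar>t\<bar> - s)^2" by simp
  hence "2 * s * \<bar>t\<bar> \<le> t^2 + s^2" by (simp add: power2_eq_square algebra_simps)
  thus ?thesis using s by (simp add: field_simps power2_eq_square)
qed

lemma F3:
  assumes B: "B > 0" and s: "s > 0"
    and uv: "\<And>k. k \<in> {1..n} \<Longrightarrow> \<bar>u k\<bar> \<le> 2*B \<and> \<bar>v k\<bar> \<le> 2*B" and d: "\<bar>d\<bar> \<le> 2*B"
  shows "(\<Sum>k\<in>{1..n}. u k * X k + v k * Y k) + d * Z
     \<le> B * (((\<Sum>k=1..n. (X k)^2 + (Y k)^2) + Z^2) / s + (2 * real n + 1) * s)"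
proof -
  have "(\<Sum>k\<in>{1..n}. u k * X k + v k * Y k) + d * Z \<le> (\<Sum>k\<in>{1..n}. 2*B * \<bar>X k\<bar> + 2*B * \<bar>Y k\<bar>) + 2*B * \<bar>Z\<bar>"
  proof (rule add_mono, rule sum_mono)
    fix k assume k: "k \<in> {1..n}"
    have "u k * X k \<le> \<bar>u k\<bar> * \<bar>X k\<bar>" by (simp add: abs_mult[symmetric])
    also have "\<dots> \<le> 2*B * \<bar>X k\<bar>" using uv[OF k] by (intro mult_right_mono) auto
    finally have 1: "u k * X k \<le> 2*B * \<bar>X k\<bar>" .
    have "v k * Y k \<le> \<bar>v k\<bar> * \<bar>Y k\<bar>" by (simp add: abs_mult[symmetric])
    also have "\<dots> \<le> 2*B * \<bar>Y k\<bar>" using uv[OF k] by (intro mult_right_mono) auto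
    finally have 2: "v k * Y k \<le> 2*B * \<bar>Y k\<bar>" .
    show "u k * X k + v k * Y k \<le> 2*B * \<bar>X k\<bar> + 2*B * \<bar>Y k\<bar>" using 1 2 by simp
  next
    have "d * Z \<le> \<bar>d\<bar> * \<bar>Z\<bar>" by (simp add: abs_mult[symmetric])
    also have "\<dots> \<le> 2*B * \<bar>Z\<bar>" using d by (intro mult_right_mono) auto
    finally show "d * Z \<le> 2*B * \<bar>Z\<bar>" .
  qed
  also have "\<dots> = 2*B * ((\<Sum>k\<in>{1..n}. \<bar>X k\<bar> + \<bar>Y k\<bar>) + \<bar>Z\<bar>)"
    by (simp add: sum_distrib_left distrib_left)
  also have "\<dots> \<le> 2*B * ((\<Sum>k\<in>{1..n}. ((X k)^2 / s + s) / 2 + ((Y k)^2 / s + s) / 2) + (Z^2 / s + s) / 2)"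
    using B by (intro mult_left_mono add_mono sum_mono amgm_abs[OF s]) auto
  also have "\<dots> = B * (((\<Sum>k=1..n. (X k)^2 + (Y k)^2) + Z^2) / s + (2 * real n + 1) * s)"
  proof -
    have pk: "((X k)^2 / s + s) / 2 + ((Y k)^2 / s + s) / 2 = ((X k)^2 + (Y k)^2) / (2*s) + s" for k
      using s by (simp add: add_divide_distrib)
    have "(\<Sum>k\<in>{1..n}. ((X k)^2 / s + s) / 2 + ((Y k)^2 / s + s) / 2)
       = (\<Sum>k\<in>{1..n}. ((X k)^2 + (Y k)^2) / (2*s)) + real n * s"
      unfolding pk by (simp add: sum.distrib)
    also have "\<dots> = (\<Sum>k=1..n. (X k)^2 + (Y k)^2) / (2*s) + real n * s"
      by (simp add: sum_divide_distrib[symmetric])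
    finally have e: "(\<Sum>k\<in>{1..n}. ((X k)^2 / s + s) / 2 + ((Y k)^2 / s + s) / 2)
       = (\<Sum>k=1..n. (X k)^2 + (Y k)^2) / (2*s) + real n * s" .
    have g: "2*B * (Q / (2*s) + real n * s + (z / s + s) / 2) = B * ((Q + z) / s + (2 * real n + 1) * s)" for Q z
      using s by (simp add: field_simps)
    show ?thesis unfolding e by (rule g)
  qed
  finally show ?thesis .
qed



lemma pairs_Suc: "pairs (Suc n) = pairs n \<union> (\<lambda>i. (i, Suc n)) ` {1..n}"
  unfolding pairs_def by auto

lemma pairs_sum:
  fixes f :: "nat \<Rightarrow> nat \<Rightarrow> real"
  shows "(\<Sum>i=1..n. \<Sum>j=1..n. f i j) = (\<Sum>p\<in>pairs n. f (fst p) (snd p) + f (snd p) (fst p)) + (\<Sum>i=1..n. f i i)"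
proof (induction n)
  case 0
  have "pairs 0 = {}" by (auto simp: pairs_def)
  then show ?case by simp
next
  case (Suc n)
  have disj: "pairs n \<inter> (\<lambda>i. (i, Suc n)) ` {1..n} = {}" unfolding pairs_def by auto
  have inj: "inj_on (\<lambda>i. (i, Suc n)) {1..n}" by (auto simp: inj_on_def)
  have sp: "(\<Sum>p\<in>pairs (Suc n). f (fst p) (snd p) + f (snd p) (fst p))
     = (\<Sum>p\<in>pairs n. f (fst p) (snd p) + f (snd p) (fst p)) + (\<Sum>i=1..n. f i (Suc n) + f (Suc n) i)"
  proof -
    have r: "(\<Sum>p\<in>(\<lambda>i. (i, Suc n)) ` {1..n}. f (fst p) (snd p) + f (snd p) (fst p)) = (\<Sum>i=1..n. f i (Suc n) + f (Suc n) i)"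
      by (subst sum.reindex[OF inj]) simp
    show ?thesis unfolding pairs_Suc using disj r by (simp add: sum.union_disjoint finite_pairs)
  qed
  have "(\<Sum>i=1..Suc n. \<Sum>j=1..Suc n. f i j) = (\<Sum>i=1..n. \<Sum>j=1..n. f i j) + (\<Sum>i=1..n. f i (Suc n))
      + (\<Sum>j=1..n. f (Suc n) j) + f (Suc n) (Suc n)"
    by (simp add: sum.distrib)
  also have "\<dots> = (\<Sum>p\<in>pairs (Suc n). f (fst p) (snd p) + f (snd p) (fst p)) + (\<Sum>i=1..Suc n. f i i)"
    unfolding sp Suc.IH by (simp add: sum.distrib)
  finally show ?case .
qed

lemma card_pairs_eq: "2 * real (card (pairs n)) + real n = (real n)^2"
  using pairs_sum[of "\<lambda>i j. 1" n] by (simp add: power2_eq_square)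

lemma mean_identity:
  fixes u v :: "nat \<Rightarrow> real"
  assumes n: "n \<ge> 1"
  defines "mu \<equiv> (1 / real n) * (\<Sum>i=1..n. u i)" and "mv \<equiv> (1 / real n) * (\<Sum>i=1..n. v i)"
  shows "(\<Sum>i=1..n. \<Sum>j=1..n. (u i + v j)^2)
     = real n * ((\<Sum>i=1..n. (u i - mu)^2) + (\<Sum>i=1..n. (v i - mv)^2)) + (real n)^2 * (mu + mv)^2"
proof -
  define SU where "SU = (\<Sum>i=1..n. u i)"
  define SV where "SV = (\<Sum>i=1..n. v i)"
  define SU2 where "SU2 = (\<Sum>i=1..n. (u i)^2)"
  define SV2 where "SV2 = (\<Sum>i=1..n. (v i)^2)"
  have np: "real n > 0" using n by simp
  have l: "(\<Sum>i=1..n. \<Sum>j=1..n. (u i + v j)^2) = real n * SU2 + real n * SV2 + 2 * SU * SV"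
    unfolding SU_def SV_def SU2_def SV2_def
    apply (simp add: power2_sum sum.distrib sum_distrib_left sum_distrib_right mult.assoc mult.left_commute)
    by (rule sum.swap)
  have c: "\<And>w :: nat \<Rightarrow> real. \<And>m. (\<Sum>i=1..n. (w i - m)^2) = (\<Sum>i=1..n. (w i)^2) - 2 * m * (\<Sum>i=1..n. w i) + real n * m^2"
    by (simp add: power2_diff sum.distrib sum_subtractf sum_distrib_left mult.commute mult.left_commute)
  have mu: "mu = SU / real n" and mv: "mv = SV / real n" unfolding mu_def mv_def SU_def SV_def by simp_all
  show ?thesis unfolding l c SU2_def[symmetric] SV2_def[symmetric] SU_def[symmetric] SV_def[symmetric] mu mv
    using np by (simp add: field_simps power2_eq_square)
qed



lemma good:
  assumes B: "B > 0" and n3: "n \<ge> 3" and K: "K \<ge> 0"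
    and s: "(als, bes, rs) \<in> param_space B n" and h: "(al, be, r) \<in> param_space B n"
    and ml: "loglik n (als, bes, rs) a \<le> loglik n (al, be, r) a"
    and W: "Wn n (als, bes, rs) a \<le> K * (real n)^2"
  defines "mu \<equiv> (1 / real n) * (\<Sum>i=1..n. al i - als i)"
    and "mv \<equiv> (1 / real n) * (\<Sum>i=1..n. be i - bes i)"
    and "Cst \<equiv> B * (K + 3) / cc B"
  shows "(r - rs)^2 \<le> 4 * Cst / sqrt (real n)"
    and "(mu + mv)^2 \<le> (Cst + 16 * B^2) / sqrt (real n)"
    and "(\<Sum>i=1..n. (al i - als i - mu)^2) + (\<Sum>i=1..n. (be i - bes i - mv)^2) \<le> (Cst + 16 * B^2) * sqrt (real n)"
proof -
  define u where "u = (\<lambda>i. al i - als i)"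
  define v where "v = (\<lambda>i. be i - bes i)"
  define \<theta>s where "\<theta>s = (als, bes, rs)"
  define sn where "sn = sqrt (real n)"
  have sn: "sn \<ge> 1" "sn > 0" unfolding sn_def using n3 by auto
  have nsn: "real n = sn^2" unfolding sn_def by simp
  have ccp: "cc B > 0" by (rule cc_pos)
  define T where "T = (\<Sum>p\<in>pairs n. (u (fst p) + v (snd p))^2 + (v (fst p) + u (snd p))^2 + (r - rs)^2)"
  have f1: "cc B * T \<le> (\<Sum>p\<in>pairs n. (u (fst p) + v (snd p)) * (of_bool (fst (Yp a p)) - ex1 \<theta>s p)
         + (v (fst p) + u (snd p)) * (of_bool (snd (Yp a p)) - ex2 \<theta>s p)
         + (r - rs) * (of_bool (fst (Yp a p)) * of_bool (snd (Yp a p)) - ex3 \<theta>s p))"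
    unfolding T_def u_def v_def \<theta>s_def by (rule F1[OF B s h ml])
  also have "\<dots> = (\<Sum>k\<in>{1..n}. u k * Xn n \<theta>s k a + v k * Yn n \<theta>s k a) + (r - rs) * Zn n \<theta>s a"
    unfolding F2 Zn_def cZ_def by (simp add: sum.distrib sum_distrib_left)
  also have "\<dots> \<le> B * (((\<Sum>k=1..n. (Xn n \<theta>s k a)^2 + (Yn n \<theta>s k a)^2) + (Zn n \<theta>s a)^2) / sn + (2 * real n + 1) * sn)"
  proof (rule F3[OF B sn(2)])
    fix k assume k: "k \<in> {1..n}"
    have "\<bar>al k\<bar> \<le> B \<and> \<bar>be k\<bar> \<le> B" "\<bar>als k\<bar> \<le> B \<and> \<bar>bes k\<bar> \<le> B"
      using s h k unfolding param_space_def by auto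
    thus "\<bar>u k\<bar> \<le> 2*B \<and> \<bar>v k\<bar> \<le> 2*B" by (simp add: abs_le_iff u_def v_def)
  next
    show "\<bar>r - rs\<bar> \<le> 2*B" using s h unfolding param_space_def by auto
  qed
  also have "\<dots> = B * (Wn n \<theta>s a / sn + (2 * real n + 1) * sn)" unfolding Wn_def ..
  also have "\<dots> \<le> B * (K * sn^3 + 3 * sn^3)"
  proof (intro mult_left_mono add_mono)
    have "Wn n \<theta>s a / sn \<le> K * (real n)^2 / sn" using W sn unfolding \<theta>s_def by (intro divide_right_mono) auto
    also have "\<dots> = K * sn^3" unfolding nsn using sn by (simp add: power2_eq_square power3_eq_cube)
    finally show "Wn n \<theta>s a / sn \<le> K * sn^3" .
    have "(2 * real n + 1) \<le> 3 * sn^2" using nsn n3 by simp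
    hence "(2 * real n + 1) * sn \<le> 3 * sn^2 * sn" using sn by (intro mult_right_mono) auto
    thus "(2 * real n + 1) * sn \<le> 3 * sn^3" by (simp add: power3_eq_cube power2_eq_square)
  qed (use B in auto)
  finally have cT: "cc B * T \<le> B * (K + 3) * sn^3" by (simp add: algebra_simps)
  hence "T \<le> (B * (K + 3) * sn^3) / cc B" using ccp by (simp add: pos_le_divide_eq mult.commute)
  hence Tb: "T \<le> Cst * sn^3" unfolding Cst_def by simp
  have Cst0: "Cst \<ge> 0" unfolding Cst_def using B K ccp by simp
  define T1 where "T1 = (\<Sum>p\<in>pairs n. (u (fst p) + v (snd p))^2 + (u (snd p) + v (fst p))^2)"
  have Tsplit: "T = T1 + real (card (pairs n)) * (r - rs)^2"
    unfolding T_def T1_def by (simp add: sum.distrib add.commute)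
  have T10: "T1 \<ge> 0" unfolding T1_def by (intro sum_nonneg) auto
  have card: "real (card (pairs n)) \<ge> sn^4 / 4"
  proof -
    have "2 * real (card (pairs n)) = (real n)^2 - real n" using card_pairs_eq[of n] by simp
    moreover have "real n \<le> (real n)^2 / 2" using n3 by (simp add: power2_eq_square)
    ultimately have "real (card (pairs n)) \<ge> (real n)^2 / 4" by simp
    thus ?thesis unfolding nsn by (simp add: power2_eq_square power4_eq_xxxx)
  qed
  show "(r - rs)^2 \<le> 4 * Cst / sqrt (real n)"
  proof -
    have c1: "sn^4 / 4 * (r - rs)^2 \<le> real (card (pairs n)) * (r - rs)^2"
      by (rule mult_right_mono[OF card]) simp
    have c2: "real (card (pairs n)) * (r - rs)^2 \<le> Cst * sn^3" using Tb Tsplit T10 by linarith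
    have c3: "sn^4 / 4 * (r - rs)^2 \<le> Cst * sn^3" using c1 c2 by (rule order_trans)
    have c4: "(r - rs)^2 * sn^4 \<le> (4 * Cst / sn) * sn^4"
      using c3 sn(1) by (simp add: field_simps power4_eq_xxxx power3_eq_cube)
    have "(r - rs)^2 \<le> 4 * Cst / sn"
      by (rule mult_right_le_imp_le[OF c4]) (use sn in simp)
    thus ?thesis unfolding sn_def .
  qed
  have diag: "(\<Sum>i=1..n. (u i + v i)^2) \<le> real n * (16 * B^2)"
  proof -
    have "(\<Sum>i=1..n. (u i + v i)^2) \<le> (\<Sum>i=1..n. 16 * B^2)"
    proof (rule sum_mono)
      fix i assume i: "i \<in> {1..n}"
      have "\<bar>al i\<bar> \<le> B \<and> \<bar>be i\<bar> \<le> B" "\<bar>als i\<bar> \<le> B \<and> \<bar>bes i\<bar> \<le> B"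
        using s h i unfolding param_space_def by auto
      hence "\<bar>u i + v i\<bar> \<le> 4 * B" by (simp add: abs_le_iff u_def v_def)
      hence "\<bar>u i + v i\<bar>^2 \<le> (4 * B)^2" by (intro power_mono) auto
      thus "(u i + v i)^2 \<le> 16 * B^2" by (simp add: power_mult_distrib)
    qed
    thus ?thesis by simp
  qed
  have full: "(\<Sum>i=1..n. \<Sum>j=1..n. (u i + v j)^2) \<le> Cst * sn^3 + 16 * B^2 * sn^2"
  proof -
    have "(\<Sum>i=1..n. \<Sum>j=1..n. (u i + v j)^2) = T1 + (\<Sum>i=1..n. (u i + v i)^2)"
      unfolding T1_def by (rule pairs_sum)
    moreover have "T1 \<le> Cst * sn^3" 
    proof -
      have "real (card (pairs n)) * (r - rs)^2 \<ge> 0" by simp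
      thus ?thesis using Tb Tsplit by linarith
    qed
    ultimately show ?thesis using diag nsn by (simp add: algebra_simps)
  qed
  have mi: "(\<Sum>i=1..n. \<Sum>j=1..n. (u i + v j)^2)
     = real n * ((\<Sum>i=1..n. (u i - mu)^2) + (\<Sum>i=1..n. (v i - mv)^2)) + (real n)^2 * (mu + mv)^2"
    unfolding mu_def mv_def u_def v_def by (rule mean_identity) (use n3 in simp)
  define S3 where "S3 = (\<Sum>i=1..n. (u i - mu)^2) + (\<Sum>i=1..n. (v i - mv)^2)"
  have S30: "S3 \<ge> 0" unfolding S3_def by (intro add_nonneg_nonneg sum_nonneg) auto
  have key: "sn^2 * S3 + sn^4 * (mu + mv)^2 \<le> Cst * sn^3 + 16 * B^2 * sn^2"
    using full mi unfolding S3_def[symmetric] nsn by (simp add: power4_eq_xxxx power2_eq_square)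
  show "(\<Sum>i=1..n. (al i - als i - mu)^2) + (\<Sum>i=1..n. (be i - bes i - mv)^2) \<le> (Cst + 16 * B^2) * sqrt (real n)"
  proof -
    have "sn^2 * S3 \<le> Cst * sn^3 + 16 * B^2 * sn^2" 
    proof -
      have "sn^4 * (mu + mv)^2 \<ge> 0" by simp
      thus ?thesis using key by linarith
    qed
    hence "sn^2 * S3 \<le> sn^2 * (Cst * sn + 16 * B^2)" by (simp add: algebra_simps power2_eq_square power3_eq_cube)
    hence "S3 \<le> Cst * sn + 16 * B^2" using sn by simp
    also have "\<dots> \<le> (Cst + 16 * B^2) * sn"
    proof -
      have "16 * B^2 * 1 \<le> 16 * B^2 * sn" using sn by (intro mult_left_mono) auto
      thus ?thesis by (simp add: algebra_simps)
    qed
    finally show ?thesis unfolding S3_def u_def v_def sn_def .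
  qed
  show "(mu + mv)^2 \<le> (Cst + 16 * B^2) / sqrt (real n)"
  proof -
    have "sn^4 * (mu + mv)^2 \<le> Cst * sn^3 + 16 * B^2 * sn^2"
    proof -
      have "sn^2 * S3 \<ge> 0" using S30 by simp
      thus ?thesis using key by linarith
    qed
    also have "\<dots> \<le> sn^4 * ((Cst + 16 * B^2) / sn)"
    proof -
      have "16 * B^2 * sn^2 \<le> 16 * B^2 * sn^3" using sn by (intro mult_left_mono power_increasing) auto
      hence "Cst * sn^3 + 16 * B^2 * sn^2 \<le> (Cst + 16 * B^2) * sn^3" by (simp add: algebra_simps)
      also have "\<dots> = sn^4 * ((Cst + 16 * B^2) / sn)" using sn by (simp add: field_simps power4_eq_xxxx power3_eq_cube)
      finally show ?thesis .
    qed
    finally have "sn^4 * (mu + mv)^2 \<le> sn^4 * ((Cst + 16 * B^2) / sn)" .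
    hence "(mu + mv)^2 \<le> (Cst + 16 * B^2) / sn"
      by (rule mult_left_le_imp_le) (use sn in simp)
    thus ?thesis unfolding sn_def .
  qed
qed



lemma prob_mono:
  assumes "\<And>a. a \<in> configs n \<Longrightarrow> E a \<Longrightarrow> E' a"
  shows "prob n \<theta> E \<le> prob n \<theta> E'"
  unfolding prob_def using assms
  by (intro sum_mono2) (auto simp: finite_configs lik_nonneg)

lemma Wn_nonneg: "Wn n \<theta> a \<ge> 0"
  unfolding Wn_def by (intro add_nonneg_nonneg sum_nonneg) auto

lemma tail:
  assumes K: "K > 0" and n: "n \<ge> 1"
  shows "prob n \<theta> (\<lambda>a. K * (real n)^2 < Wn n \<theta> a) \<le> 9 / K"
proof -
  have t: "K * (real n)^2 > 0" using K n by simp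
  have "prob n \<theta> (\<lambda>a. K * (real n)^2 < Wn n \<theta> a) \<le> Ex n \<theta> (Wn n \<theta>) / (K * (real n)^2)"
    by (rule markov[OF t]) (rule Wn_nonneg)
  also have "\<dots> \<le> 9 * (real n)^2 / (K * (real n)^2)"
    using EW t by (intro divide_right_mono) auto
  also have "\<dots> = 9 / K" using n by simp
  finally show ?thesis .
qed

lemma bigOp_crit:
  assumes "\<And>\<epsilon>. \<epsilon> > 0 \<Longrightarrow> \<exists>M. \<forall>n\<ge>3. \<forall>a\<in>configs n. Wn n (\<theta> n) a \<le> (18/\<epsilon>) * (real n)^2 \<longrightarrow> \<bar>X n a\<bar> \<le> M * r n"
  shows "bigOp (\<lambda>n. prob n (\<theta> n)) X r"
  unfolding bigOp_def
proof (intro allI impI)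
  fix \<epsilon> :: real assume e: "\<epsilon> > 0"
  obtain M where M: "\<forall>n\<ge>3. \<forall>a\<in>configs n. Wn n (\<theta> n) a \<le> (18/\<epsilon>) * (real n)^2 \<longrightarrow> \<bar>X n a\<bar> \<le> M * r n"
    using assms[OF e] by blast
  have "\<forall>n\<ge>3. prob n (\<theta> n) (\<lambda>a. \<bar>X n a\<bar> > M * r n) < \<epsilon>"
  proof (intro allI impI)
    fix n :: nat assume n: "n \<ge> 3"
    have "prob n (\<theta> n) (\<lambda>a. \<bar>X n a\<bar> > M * r n) \<le> prob n (\<theta> n) (\<lambda>a. (18/\<epsilon>) * (real n)^2 < Wn n (\<theta> n) a)"
      using M n by (intro prob_mono) (meson not_le)
    also have "\<dots> \<le> 9 / (18/\<epsilon>)" using e n by (intro tail) auto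
    also have "\<dots> = \<epsilon> / 2" by simp
    also have "\<dots> < \<epsilon>" using e by simp
    finally show "prob n (\<theta> n) (\<lambda>a. \<bar>X n a\<bar> > M * r n) < \<epsilon>" .
  qed
  thus "\<exists>M N. \<forall>n\<ge>N. prob n (\<theta> n) (\<lambda>a. \<bar>X n a\<bar> > M * r n) < \<epsilon>" by blast
qed

lemma ln_sq_ge1: "n \<ge> 3 \<Longrightarrow> 1 \<le> (ln (real n))^2"
proof -
  assume n: "n \<ge> 3"
  have "exp 1 \<le> real n" using exp_le n by linarith
  hence "1 \<le> ln (real n)" using ln_ge_iff[of "real n" 1] n by simp
  thus ?thesis by (simp add: one_le_power)
qed

theorem theorem1:
  fixes B :: real
    and alS beS :: "nat \<Rightarrow> nat \<Rightarrow> real"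
    and rhoS :: "nat \<Rightarrow> real"
    and est :: "nat \<Rightarrow> adj \<Rightarrow> params"
  assumes "B > 0"
    and true_par: "\<And>n. (alS n, beS n, rhoS n) \<in> param_space B n"
    and mle: "\<And>n a. a \<in> configs n \<Longrightarrow> is_mle B n a (est n a)"
  defines "P \<equiv> \<lambda>n. prob n (alS n, beS n, rhoS n)"
    and "dA \<equiv> \<lambda>n a. (1 / real n) * (\<Sum>i=1..n. fst (est n a) i - alS n i)"
    and "dB \<equiv> \<lambda>n a. (1 / real n) * (\<Sum>i=1..n. fst (snd (est n a)) i - beS n i)"
    and "r \<equiv> \<lambda>n. (ln (real n))\<^sup>2 / sqrt (real n)"
  shows "bigOp P (\<lambda>n a. (snd (snd (est n a)) - rhoS n)\<^sup>2) r
    \<and> bigOp P (\<lambda>n a. (dA n a + dB n a)\<^sup>2) r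
    \<and> bigOp P (\<lambda>n a. (\<Sum>i=1..n. (fst (est n a) i - alS n i - dA n a)\<^sup>2)
                        + (\<Sum>i=1..n. (fst (snd (est n a)) i - beS n i - dB n a)\<^sup>2))
                 (\<lambda>n. sqrt (real n) * (ln (real n))\<^sup>2)"
proof -
  note B = \<open>B > 0\<close>
  define Cs where "Cs = (\<lambda>\<epsilon>::real. B * (18/\<epsilon> + 3) / cc B)"
  have Cs0: "Cs \<epsilon> \<ge> 0" if "\<epsilon> > 0" for \<epsilon> unfolding Cs_def using B that cc_pos[of B] by simp
  have G: "(snd (snd (est n a)) - rhoS n)^2 \<le> 4 * Cs \<epsilon> / sqrt (real n)
         \<and> (dA n a + dB n a)^2 \<le> (Cs \<epsilon> + 16 * B^2) / sqrt (real n)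
         \<and> (\<Sum>i=1..n. (fst (est n a) i - alS n i - dA n a)\<^sup>2) + (\<Sum>i=1..n. (fst (snd (est n a)) i - beS n i - dB n a)\<^sup>2)
             \<le> (Cs \<epsilon> + 16 * B^2) * sqrt (real n)"
    if e: "\<epsilon> > 0" and n: "n \<ge> 3" and a: "a \<in> configs n" and W: "Wn n (alS n, beS n, rhoS n) a \<le> (18/\<epsilon>) * (real n)^2"
    for \<epsilon> n a
  proof -
    obtain al be rr where est: "est n a = (al, be, rr)" by (metis prod_cases3)
    have m: "is_mle B n a (al, be, rr)" using mle[OF a] est by simp
    have h: "(al, be, rr) \<in> param_space B n" using m unfolding is_mle_def by simp
    have ml: "loglik n (alS n, beS n, rhoS n) a \<le> loglik n (al, be, rr) a"
      using m true_par[of n] unfolding is_mle_def by blast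
    have K: "18/\<epsilon> \<ge> 0" using e by simp
    note g = good[OF B n K true_par h ml W]
    show ?thesis using g unfolding est dA_def dB_def Cs_def by simp
  qed
  have sc1: "M / sqrt (real n) \<le> M * r n" if "M \<ge> 0" "n \<ge> 3" for M n
  proof -
    have "M / sqrt (real n) * 1 \<le> M / sqrt (real n) * (ln (real n))^2"
      using that ln_sq_ge1[of n] by (intro mult_left_mono) auto
    thus ?thesis unfolding r_def by simp
  qed
  have sc2: "M * sqrt (real n) \<le> M * (sqrt (real n) * (ln (real n))^2)" if "M \<ge> 0" "n \<ge> 3" for M n
  proof -
    have "M * sqrt (real n) * 1 \<le> M * sqrt (real n) * (ln (real n))^2"
      using that ln_sq_ge1[of n] by (intro mult_left_mono) auto
    thus ?thesis by (simp add: mult.assoc)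
  qed
  have part1: "bigOp P (\<lambda>n a. (snd (snd (est n a)) - rhoS n)\<^sup>2) r"
    unfolding P_def
  proof (rule bigOp_crit)
    fix \<epsilon> :: real assume e: "\<epsilon> > 0"
    show "\<exists>M. \<forall>n\<ge>3. \<forall>a\<in>configs n. Wn n (alS n, beS n, rhoS n) a \<le> (18/\<epsilon>) * (real n)^2 \<longrightarrow> \<bar>(snd (snd (est n a)) - rhoS n)\<^sup>2\<bar> \<le> M * r n"
    proof (intro exI allI impI ballI)
      fix n a assume n: "n \<ge> 3" and a: "a \<in> configs n" and W: "Wn n (alS n, beS n, rhoS n) a \<le> (18/\<epsilon>) * (real n)^2"
      have "\<bar>(snd (snd (est n a)) - rhoS n)\<^sup>2\<bar> \<le> 4 * Cs \<epsilon> / sqrt (real n)" using G[OF e n a W] by simp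
      also have "\<dots> \<le> (4 * Cs \<epsilon>) * r n" using sc1[of "4 * Cs \<epsilon>" n] Cs0[OF e] n by simp
      finally show "\<bar>(snd (snd (est n a)) - rhoS n)\<^sup>2\<bar> \<le> (4 * Cs \<epsilon>) * r n" .
    qed
  qed
  have part2: "bigOp P (\<lambda>n a. (dA n a + dB n a)\<^sup>2) r"
    unfolding P_def
  proof (rule bigOp_crit)
    fix \<epsilon> :: real assume e: "\<epsilon> > 0"
    show "\<exists>M. \<forall>n\<ge>3. \<forall>a\<in>configs n. Wn n (alS n, beS n, rhoS n) a \<le> (18/\<epsilon>) * (real n)^2 \<longrightarrow> \<bar>(dA n a + dB n a)\<^sup>2\<bar> \<le> M * r n"
    proof (intro exI allI impI ballI)
      fix n a assume n: "n \<ge> 3" and a: "a \<in> configs n" and W: "Wn n (alS n, beS n, rhoS n) a \<le> (18/\<epsilon>) * (real n)^2"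
      have "\<bar>(dA n a + dB n a)\<^sup>2\<bar> \<le> (Cs \<epsilon> + 16 * B^2) / sqrt (real n)" using G[OF e n a W] by simp
      also have "\<dots> \<le> (Cs \<epsilon> + 16 * B^2) * r n" using sc1[of "Cs \<epsilon> + 16 * B^2" n] Cs0[OF e] n by simp
      finally show "\<bar>(dA n a + dB n a)\<^sup>2\<bar> \<le> (Cs \<epsilon> + 16 * B^2) * r n" .
    qed
  qed
  have part3: "bigOp P (\<lambda>n a. (\<Sum>i=1..n. (fst (est n a) i - alS n i - dA n a)\<^sup>2)
                        + (\<Sum>i=1..n. (fst (snd (est n a)) i - beS n i - dB n a)\<^sup>2))
                 (\<lambda>n. sqrt (real n) * (ln (real n))\<^sup>2)"
    unfolding P_def
  proof (rule bigOp_crit)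
    fix \<epsilon> :: real assume e: "\<epsilon> > 0"
    show "\<exists>M. \<forall>n\<ge>3. \<forall>a\<in>configs n. Wn n (alS n, beS n, rhoS n) a \<le> (18/\<epsilon>) * (real n)^2 \<longrightarrow>
       \<bar>(\<Sum>i=1..n. (fst (est n a) i - alS n i - dA n a)\<^sup>2) + (\<Sum>i=1..n. (fst (snd (est n a)) i - beS n i - dB n a)\<^sup>2)\<bar>
         \<le> M * (sqrt (real n) * (ln (real n))\<^sup>2)"
    proof (intro exI allI impI ballI)
      fix n a assume n: "n \<ge> 3" and a: "a \<in> configs n" and W: "Wn n (alS n, beS n, rhoS n) a \<le> (18/\<epsilon>) * (real n)^2"
      have nn: "(\<Sum>i=1..n. (fst (est n a) i - alS n i - dA n a)\<^sup>2) + (\<Sum>i=1..n. (fst (snd (est n a)) i - beS n i - dB n a)\<^sup>2) \<ge> 0"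
        by (intro add_nonneg_nonneg sum_nonneg) auto
      have "\<bar>(\<Sum>i=1..n. (fst (est n a) i - alS n i - dA n a)\<^sup>2) + (\<Sum>i=1..n. (fst (snd (est n a)) i - beS n i - dB n a)\<^sup>2)\<bar>
           \<le> (Cs \<epsilon> + 16 * B^2) * sqrt (real n)" using G[OF e n a W] nn by simp
      also have "\<dots> \<le> (Cs \<epsilon> + 16 * B^2) * (sqrt (real n) * (ln (real n))\<^sup>2)"
        using sc2[of "Cs \<epsilon> + 16 * B^2" n] Cs0[OF e] n by simp
      finally show "\<bar>(\<Sum>i=1..n. (fst (est n a) i - alS n i - dA n a)\<^sup>2) + (\<Sum>i=1..n. (fst (snd (est n a)) i - beS n i - dB n a)\<^sup>2)\<bar>
         \<le> (Cs \<epsilon> + 16 * B^2) * (sqrt (real n) * (ln (real n))\<^sup>2)" .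
    qed
  qed
  show ?thesis using part1 part2 part3 by blast
qed

end
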